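(* Let $p$ be a prime, $n\ge1$, $\zeta=\zeta_{p^n}$ a primitive $p^n$th root of unity, $T=\mathbb{Z}_{(p)}[\zeta]$, $t=1-\zeta$ with valuation $v_t$. Then the tuple $\tau=(1-\zeta^j)_{j\in[0,p^n-1]}$ is minimally ordered.
   Context: A tuple $(\xi_0,\dots,\xi_{r-1})$ of pairwise distinct elements of $T$ is minimally ordered if $\sum_{i\in[0,j-1]}v_t(\xi_j-\xi_i)\le\sum_{i\in[0,j-1]}v_t(\xi_k-\xi_i)$ for all $j\in[0,r-1]$ and $k\in[j+1,r-1]$. *)

theory Defs
  imports Complex_Main "HOL-Computational_Algebra.Primes"
begin

definition Zloc :: "nat \<Rightarrow> complex set" where
  "Zloc p = {of_int a / of_int b | a b. b \<noteq> 0 \<and> \<not> (int p dvd b)}"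

definition Tring :: "nat \<Rightarrow> complex \<Rightarrow> complex set" where
  "Tring p \<zeta> = {(\<Sum>i<N. c i * \<zeta> ^ i) | N c. \<forall>i. c i \<in> Zloc p}"

text \<open>The t-adic valuation on T, t = 1 - zeta: the largest k such that t^k divides x in T
  (meaningful for nonzero x).\<close>
definition vt :: "nat \<Rightarrow> complex \<Rightarrow> complex \<Rightarrow> nat" where
  "vt p \<zeta> x = (GREATEST k. \<exists>y\<in>Tring p \<zeta>. x = (1 - \<zeta>) ^ k * y)"

definition minimally_ordered :: "nat \<Rightarrow> complex \<Rightarrow> nat \<Rightarrow> (nat \<Rightarrow> complex) \<Rightarrow> bool" where
  "minimally_ordered p \<zeta> r \<xi> \<longleftrightarrow>
     (\<forall>i<r. \<xi> i \<in> Tring p \<zeta>) \<and> inj_on \<xi> {0..<r} \<and>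
     (\<forall>j<r. \<forall>k. j < k \<and> k < r \<longrightarrow>
        (\<Sum>i<j. vt p \<zeta> (\<xi> j - \<xi> i)) \<le> (\<Sum>i<j. vt p \<zeta> (\<xi> k - \<xi> i)))"

end

theory Submission
  imports Defs "Jordan_Normal_Form.Char_Poly" "HOL-Number_Theory.Cong"
begin

lemma sum_zeta_algint:
  fixes z :: complex and M N :: nat and e :: "nat \<Rightarrow> int"
  assumes z: "z^M = 1" and M: "M > 0"
  shows "algebraic_int (\<Sum>i<N. of_int (e i) * z^i)"
proof -
  define \<alpha> where "\<alpha> = (\<Sum>i<N. of_int (e i) * z^i)"
  define A where "A = mat M M (\<lambda>(l,r). \<Sum>i<N. if (i+l) mod M = r then e i else 0)"
  define v where "v = vec M (\<lambda>r. z^r)"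
  have A: "A \<in> carrier_mat M M" unfolding A_def by simp
  have Ac: "(map_mat of_int A :: complex mat) \<in> carrier_mat M M" using A by simp
  have zmod: "z ^ (x mod M) = z ^ x" for x
  proof -
    have "z ^ x = z ^ (M * (x div M) + x mod M)" by (metis mult.commute div_mult_mod_eq)
    also have "\<dots> = z ^ (x mod M)" by (simp only: power_add power_mult z power_one_right power_one mult_1)
    finally show ?thesis by simp
  qed
  have row: "(\<Sum>r<M. z ^ r * (\<Sum>i<N. complex_of_int (if (i+l) mod M = r then e i else 0))) = z ^ l * \<alpha>" for l
  proof -
    have "(\<Sum>r<M. z ^ r * (\<Sum>i<N. complex_of_int (if (i+l) mod M = r then e i else 0)))
        = (\<Sum>r<M. \<Sum>i<N. (if (i+l) mod M = r then of_int (e i) * z ^ r else 0))"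
      by (simp add: sum_distrib_left; intro sum.cong refl; simp)
    also have "\<dots> = (\<Sum>i<N. \<Sum>r<M. (if (i+l) mod M = r then of_int (e i) * z ^ r else 0))"
      by (rule sum.swap)
    also have "\<dots> = (\<Sum>i<N. of_int (e i) * z ^ ((i+l) mod M))"
      using M by (simp add: sum.delta')
    also have "\<dots> = (\<Sum>i<N. of_int (e i) * z ^ (i+l))" by (simp add: zmod)
    also have "\<dots> = z ^ l * \<alpha>" unfolding \<alpha>_def
      by (simp add: sum_distrib_left power_add algebra_simps)
    finally show ?thesis .
  qed
  have ev: "eigenvector (map_mat of_int A) v \<alpha>"
    unfolding eigenvector_def
  proof (intro conjI)
    show "v \<in> carrier_vec (dim_row (map_mat of_int A))" using A unfolding v_def by simp
    show "v \<noteq> 0\<^sub>v (dim_row (map_mat of_int A))"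
    proof
      assume "v = 0\<^sub>v (dim_row (map_mat of_int A))"
      hence "v $ 0 = 0" using A M by simp
      thus False using M unfolding v_def by simp
    qed
    show "map_mat of_int A *\<^sub>v v = \<alpha> \<cdot>\<^sub>v v"
    proof (rule eq_vecI)
      fix l assume "l < dim_vec (\<alpha> \<cdot>\<^sub>v v)"
      hence l: "l < M" unfolding v_def by simp
      have "(map_mat of_int A *\<^sub>v v) $ l = (\<Sum>r<M. z ^ r * (\<Sum>i<N. complex_of_int (if (i+l) mod M = r then e i else 0)))"
        using l unfolding A_def v_def by (simp add: mult_mat_vec_def scalar_prod_def atLeast0LessThan of_int_sum mult.commute)
      also have "\<dots> = (\<alpha> \<cdot>\<^sub>v v) $ l" using l unfolding v_def by (simp add: row)
      finally show "(map_mat of_int A *\<^sub>v v) $ l = (\<alpha> \<cdot>\<^sub>v v) $ l" .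
    qed (simp add: A_def v_def)
  qed
  hence "eigenvalue (map_mat of_int A) \<alpha>" unfolding eigenvalue_def by blast
  hence "poly (char_poly (map_mat of_int A)) \<alpha> = 0" using eigenvalue_root_char_poly[OF Ac] by simp
  moreover have "char_poly (map_mat of_int A :: complex mat) = map_poly of_int (char_poly A)"
    by (rule of_int_hom.char_poly_hom[OF A])
  ultimately have "poly (map_poly of_int (char_poly A)) \<alpha> = 0" by simp
  moreover have "lead_coeff (char_poly A) = 1" using degree_monic_char_poly[OF A] by simp
  ultimately show ?thesis unfolding \<alpha>_def algebraic_int_altdef_ipoly by blast
qed

lemma primeI_int: "prime (p::nat) \<Longrightarrow> prime (int p)" by simp

lemma ZlocI: "b \<noteq> 0 \<Longrightarrow> \<not> int p dvd b \<Longrightarrow> x = of_int a / of_int b \<Longrightarrow> x \<in> Zloc p"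
  unfolding Zloc_def by blast

lemma TringI: "\<forall>i. c i \<in> Zloc p \<Longrightarrow> x = (\<Sum>i<N. c i * z ^ i) \<Longrightarrow> x \<in> Tring p z"
  unfolding Tring_def by blast

lemma Zloc_int: "prime p \<Longrightarrow> of_int a \<in> Zloc p"
  unfolding Zloc_def by (rule CollectI, rule exI[of _ a], rule exI[of _ 1]) (auto simp: prime_gt_1_nat)

lemma Zloc_add: assumes "prime p" "x \<in> Zloc p" "y \<in> Zloc p" shows "x + y \<in> Zloc p"
proof -
  from assms(2) obtain a b where x: "x = of_int a / of_int b" "b \<noteq> 0" "\<not> int p dvd b" unfolding Zloc_def by auto
  from assms(3) obtain c d where y: "y = of_int c / of_int d" "d \<noteq> 0" "\<not> int p dvd d" unfolding Zloc_def by auto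
  have "x + y = of_int (a*d + c*b) / of_int (b*d)" using x y by (simp add: field_simps)
  moreover have "\<not> int p dvd b*d" using x y assms(1) by (simp add: prime_dvd_mult_iff)
  ultimately show ?thesis using x y by (intro ZlocI[of "b*d"]) (auto simp del: of_int_add of_int_mult)
qed

lemma Zloc_mult: assumes "prime p" "x \<in> Zloc p" "y \<in> Zloc p" shows "x * y \<in> Zloc p"
proof -
  from assms(2) obtain a b where x: "x = of_int a / of_int b" "b \<noteq> 0" "\<not> int p dvd b" unfolding Zloc_def by auto
  from assms(3) obtain c d where y: "y = of_int c / of_int d" "d \<noteq> 0" "\<not> int p dvd d" unfolding Zloc_def by auto
  have "x * y = of_int (a*c) / of_int (b*d)" using x y by (simp add: field_simps)
  moreover have "\<not> int p dvd b*d" using x y assms(1) by (simp add: prime_dvd_mult_iff)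
  ultimately show ?thesis using x y by (intro ZlocI[of "b*d"]) (auto simp del: of_int_add of_int_mult)
qed

lemma T_monom: assumes "c \<in> Zloc p" "prime p" shows "c * z ^ k \<in> Tring p z"
proof -
  have "c * z ^ k = (\<Sum>i<Suc k. (if i = k then c else 0) * z ^ i)"
    by (simp add: if_distrib sum.delta' cong: if_cong)
  moreover have "\<forall>i. (if i = k then c else 0) \<in> Zloc p" using assms Zloc_int[of p 0] by auto
  ultimately show ?thesis by (intro TringI)
qed

lemma sum_pad: "N \<le> K \<Longrightarrow> (\<Sum>i<K. (if i < N then c i else 0) * (z::complex) ^ i) = (\<Sum>i<N. c i * z ^ i)"
proof -
  assume "N \<le> K"
  have "(\<Sum>i<K. (if i < N then c i else 0) * z ^ i) = (\<Sum>i<K. if i < N then c i * z ^ i else 0)"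
    by (intro sum.cong) auto
  also have "\<dots> = (\<Sum>i\<in>{i\<in>{..<K}. i < N}. c i * z ^ i)" by (rule sum.inter_filter[symmetric]) simp
  also have "{i\<in>{..<K}. i < N} = {..<N}" using \<open>N \<le> K\<close> by auto
  finally show ?thesis .
qed

lemma T_add: assumes "prime p" "x \<in> Tring p z" "y \<in> Tring p z" shows "x + y \<in> Tring p z"
proof -
  from assms(2) obtain N c where x: "x = (\<Sum>i<N. c i * z ^ i)" "\<forall>i. c i \<in> Zloc p" unfolding Tring_def by auto
  from assms(3) obtain N' d where y: "y = (\<Sum>i<N'. d i * z ^ i)" "\<forall>i. d i \<in> Zloc p" unfolding Tring_def by auto
  have z0: "0 \<in> Zloc p" using Zloc_int[OF assms(1), of 0] by simp
  have "x + y = (\<Sum>i<N+N'. (if i < N then c i else 0) * z ^ i) + (\<Sum>i<N+N'. (if i < N' then d i else 0) * z ^ i)"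
    using x y by (simp add: sum_pad)
  also have "\<dots> = (\<Sum>i<N+N'. ((if i < N then c i else 0) + (if i < N' then d i else 0)) * z ^ i)"
    by (simp add: sum.distrib distrib_right)
  finally have "x + y = \<dots>" .
  moreover have "\<forall>i. ((if i < N then c i else 0) + (if i < N' then d i else 0)) \<in> Zloc p"
    using x y z0 Zloc_add[OF assms(1)] by auto
  ultimately show ?thesis by (intro TringI)
qed

lemma T_zero: "prime p \<Longrightarrow> 0 \<in> Tring p z"
  using T_monom[of 0 p z 0] Zloc_int[of p 0] by simp

lemma T_one: "prime p \<Longrightarrow> 1 \<in> Tring p z"
  using T_monom[of 1 p z 0] Zloc_int[of p 1] by simp

lemma T_int: "prime p \<Longrightarrow> of_int a \<in> Tring p z"
  using T_monom[of "of_int a" p z 0] Zloc_int[of p a] by simp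

lemma T_nat: "prime p \<Longrightarrow> of_nat a \<in> Tring p z"
  using T_int[of p "int a" z] by simp

lemma T_zpow: "prime p \<Longrightarrow> z ^ k \<in> Tring p z"
  using T_monom[of 1 p z k] Zloc_int[of p 1] by simp

lemma T_sum: assumes "prime p" "\<And>i. i \<in> A \<Longrightarrow> f i \<in> Tring p z" shows "sum f A \<in> Tring p z"
  using assms(2)
proof (induction A rule: infinite_finite_induct)
  case (insert x F) thus ?case using T_add[OF assms(1)] by simp
qed (use T_zero[OF assms(1)] in auto)

lemma T_mult: assumes "prime p" "x \<in> Tring p z" "y \<in> Tring p z" shows "x * y \<in> Tring p z"
proof -
  from assms(2) obtain N c where x: "x = (\<Sum>i<N. c i * z ^ i)" "\<forall>i. c i \<in> Zloc p" unfolding Tring_def by auto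
  from assms(3) obtain N' d where y: "y = (\<Sum>i<N'. d i * z ^ i)" "\<forall>i. d i \<in> Zloc p" unfolding Tring_def by auto
  have "x * y = (\<Sum>i<N. \<Sum>j<N'. (c i * d j) * z ^ (i + j))"
    using x y by (simp add: sum_distrib_left sum_distrib_right power_add algebra_simps sum.swap[of _ "{..<N'}"])
  moreover have "(\<Sum>i<N. \<Sum>j<N'. (c i * d j) * z ^ (i + j)) \<in> Tring p z"
    using x y by (intro T_sum[OF assms(1)] T_monom Zloc_mult assms(1)) auto
  ultimately show ?thesis by simp
qed

lemma T_uminus: assumes "prime p" "x \<in> Tring p z" shows "- x \<in> Tring p z"
  using T_mult[OF assms(1) T_int[OF assms(1), of "-1"] assms(2)] by simp

lemma T_diff: assumes "prime p" "x \<in> Tring p z" "y \<in> Tring p z" shows "x - y \<in> Tring p z"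
  using T_add[OF assms(1) assms(2) T_uminus[OF assms(1) assms(3)]] by simp

lemma T_power: assumes "prime p" "x \<in> Tring p z" shows "x ^ k \<in> Tring p z"
  by (induction k) (auto simp: T_one[OF assms(1)] T_mult[OF assms(1)] assms(2))

lemma T_prod: assumes "prime p" "\<And>i. i \<in> A \<Longrightarrow> f i \<in> Tring p z" shows "prod f A \<in> Tring p z"
  using assms(2)
proof (induction A rule: infinite_finite_induct)
  case (insert x F) thus ?case using T_mult[OF assms(1)] by simp
qed (use T_one[OF assms(1)] in auto)

lemma inv_p_notin_T:
  fixes z :: complex
  assumes p: "prime p" and z: "z^M = 1" and M: "M > 0"
  shows "1 / of_nat p \<notin> Tring p z"
proof
  assume "1 / of_nat p \<in> Tring p z"
  then obtain N c where eq: "1 / of_nat p = (\<Sum>i<N. c i * z ^ i)" and c: "\<forall>i. c i \<in> Zloc p"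
    unfolding Tring_def by auto
  have "\<forall>i. \<exists>a b. c i = of_int a / of_int b \<and> b \<noteq> 0 \<and> \<not> int p dvd b"
    using c unfolding Zloc_def by blast
  then obtain a b where ab: "\<And>i. c i = of_int (a i) / of_int (b i)" "\<And>i. b i \<noteq> 0" "\<And>i. \<not> int p dvd b i"
    by metis
  define B where "B = (\<Prod>i<N. b i)"
  have pi: "prime (int p)" using p by simp
  have B0: "B \<noteq> 0" unfolding B_def using ab(2) by simp
  have Bp: "\<not> int p dvd B" unfolding B_def using ab(3) prime_dvd_prod_iff[OF _ pi] by auto
  define e where "e i = a i * (\<Prod>l\<in>{..<N} - {i}. b l)" for i
  have Bc: "of_int B * c i = of_int (e i)" if "i < N" for i
  proof -
    have "B = b i * (\<Prod>l\<in>{..<N} - {i}. b l)" unfolding B_def using that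
      by (simp add: prod.remove)
    thus ?thesis unfolding e_def using ab(1)[of i] ab(2)[of i] by simp
  qed
  have "of_int B / of_nat p = (\<Sum>i<N. of_int (e i) * z ^ i)"
  proof -
    have "(of_int B / of_nat p :: complex) = of_int B * (1 / of_nat p)" by simp
    also have "\<dots> = (\<Sum>i<N. (of_int B * c i) * z ^ i)" unfolding eq by (simp add: sum_distrib_left mult.assoc)
    also have "\<dots> = (\<Sum>i<N. of_int (e i) * z ^ i)" by (intro sum.cong) (simp_all add: Bc)
    finally show ?thesis .
  qed
  hence ai: "algebraic_int (of_int B / of_nat p :: complex)" using sum_zeta_algint[OF z M] by simp
  have "(of_int B / of_nat p :: complex) \<in> \<rat>" by (intro Rats_divide) auto
  hence "(of_int B / of_nat p :: complex) \<in> \<int>" using rational_algebraic_int_is_int[OF ai] by simp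
  then obtain k where k: "(of_int B / of_nat p :: complex) = of_int k" by (elim Ints_cases)
  have "p \<noteq> 0" using p by auto
  hence "(of_int B :: complex) = of_int (int p * k)" using k by (simp add: field_simps)
  hence "B = int p * k" by (simp only: of_int_eq_iff)
  thus False using Bp by simp
qed

lemma frob:
  assumes p: "prime p" and a: "a \<in> Tring p z" and b: "b \<in> Tring p z"
  shows "\<exists>w\<in>Tring p z. (a + b) ^ p = a ^ p + b ^ p + of_nat p * w"
proof -
  define f where "f k = of_nat (p choose k) * a ^ k * b ^ (p - k)" for k
  have p0: "p > 0" using p prime_gt_0_nat by blast
  have set: "{..p} = insert p (insert 0 {1..<p})" using p0 by auto
  have "(a + b) ^ p = (\<Sum>k\<le>p. f k)" unfolding f_def by (rule binomial_ring)
  also have "\<dots> = f p + (f 0 + (\<Sum>k\<in>{1..<p}. f k))" unfolding set using p0 by simp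
  also have "f p = a ^ p" unfolding f_def by simp
  also have "f 0 = b ^ p" unfolding f_def by simp
  also have "(\<Sum>k\<in>{1..<p}. f k) = of_nat p * (\<Sum>k\<in>{1..<p}. of_nat ((p choose k) div p) * a ^ k * b ^ (p - k))"
    unfolding sum_distrib_left
  proof (intro sum.cong refl)
    fix k assume "k \<in> {1..<p}"
    hence "p dvd (p choose k)" using p by (intro dvd_choose_prime) auto
    hence "p choose k = p * ((p choose k) div p)" by simp
    hence "(of_nat (p choose k) :: complex) = of_nat p * of_nat ((p choose k) div p)"
      by (metis of_nat_mult)
    thus "f k = of_nat p * (of_nat ((p choose k) div p) * a ^ k * b ^ (p - k))"
      unfolding f_def by (simp add: mult.assoc)
  qed
  finally have "(a + b) ^ p = a ^ p + b ^ p + of_nat p * (\<Sum>k\<in>{1..<p}. of_nat ((p choose k) div p) * a ^ k * b ^ (p - k))"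
    by (simp add: algebra_simps)
  moreover have "(\<Sum>k\<in>{1..<p}. of_nat ((p choose k) div p) * a ^ k * b ^ (p - k)) \<in> Tring p z"
    by (intro T_sum T_mult T_nat T_power a b p)
  ultimately show ?thesis by blast
qed

lemma neg_pow:
  assumes p: "prime p" and w: "w \<in> Tring p z"
  shows "\<exists>y\<in>Tring p z. (- w) ^ p = - (w ^ p) + of_nat p * y"
proof (cases "p = 2")
  case True
  thus ?thesis using T_power[OF p w, of 2] by (intro bexI[of _ "w^2"]) auto
next
  case False
  hence "odd p" using p prime_odd_nat prime_ge_2_nat[OF p] by force
  hence "(- w) ^ p = - (w ^ p)" by (rule power_minus_odd)
  thus ?thesis using T_zero[OF p] by (intro bexI[of _ 0]) auto
qed

lemma pow_cong:
  assumes p: "prime p" and y: "y \<in> Tring p z" and w: "w \<in> Tring p z"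
  shows "\<exists>w'\<in>Tring p z. (y + of_nat p * w) ^ p = y ^ p + of_nat p * w'"
proof -
  obtain w2 where w2: "w2 \<in> Tring p z" "(y + of_nat p * w) ^ p = y ^ p + (of_nat p * w) ^ p + of_nat p * w2"
    using frob[OF p y T_mult[OF p T_nat[OF p] w]] by blast
  have p0: "p > 0" using p prime_gt_0_nat by blast
  have pq: "\<And>x::complex. x ^ p = x * x ^ (p - 1)" using p0 by (metis Suc_diff_1 power_Suc)
  have "(of_nat p * w) ^ p = of_nat p * (of_nat p ^ (p - 1) * w ^ p)"
    by (simp only: power_mult_distrib pq[of "of_nat p"] mult.assoc)
  hence "(y + of_nat p * w) ^ p = y ^ p + of_nat p * (of_nat p ^ (p - 1) * w ^ p + w2)"
    using w2 by (simp add: algebra_simps)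
  moreover have "of_nat p ^ (p - 1) * w ^ p + w2 \<in> Tring p z"
    by (intro T_add T_mult T_power T_nat p w w2)
  ultimately show ?thesis by blast
qed

lemma t_pow_pj:
  assumes p: "prime p"
  shows "\<exists>y\<in>Tring p z. (1 - z) ^ (p ^ j) = (1 - z ^ (p ^ j)) + of_nat p * y"
proof (induction j)
  case 0
  thus ?case using T_zero[OF p] by (intro bexI[of _ 0]) auto
next
  case (Suc j)
  then obtain y where y: "y \<in> Tring p z" "(1 - z) ^ (p ^ j) = (1 - z ^ (p ^ j)) + of_nat p * y" by blast
  have zT: "z ^ (p ^ j) \<in> Tring p z" by (rule T_zpow[OF p])
  have uT: "1 - z ^ (p ^ j) \<in> Tring p z" by (intro T_diff T_one zT p)
  obtain w1 where w1: "w1 \<in> Tring p z" "((1 - z ^ (p ^ j)) + of_nat p * y) ^ p = (1 - z ^ (p ^ j)) ^ p + of_nat p * w1"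
    using pow_cong[OF p uT y(1)] by blast
  obtain w2 where w2: "w2 \<in> Tring p z" "(1 + - (z ^ (p ^ j))) ^ p = 1 ^ p + (- (z ^ (p ^ j))) ^ p + of_nat p * w2"
    using frob[OF p T_one[OF p] T_uminus[OF p zT]] by blast
  obtain w3 where w3: "w3 \<in> Tring p z" "(- (z ^ (p ^ j))) ^ p = - ((z ^ (p ^ j)) ^ p) + of_nat p * w3"
    using neg_pow[OF p zT] by blast
  have pw: "(z ^ (p ^ j)) ^ p = z ^ (p ^ Suc j)" by (simp add: power_mult[symmetric] mult.commute)
  have "(1 - z) ^ (p ^ Suc j) = ((1 - z) ^ (p ^ j)) ^ p" by (simp add: power_mult[symmetric] mult.commute)
  also have "\<dots> = (1 - z ^ (p ^ Suc j)) + of_nat p * (w1 + w2 + w3)"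
  proof -
    have e1: "((1 - z) ^ (p ^ j)) ^ p = (1 - z ^ (p ^ j)) ^ p + of_nat p * w1" using y(2) w1(2) by simp
    have e2: "(1 - z ^ (p ^ j)) ^ p = 1 + (- (z ^ (p ^ j))) ^ p + of_nat p * w2"
      using w2(2) by (simp only: diff_conv_add_uminus power_one)
    show ?thesis unfolding e1 e2 w3(2) pw by (simp add: algebra_simps)
  qed
  finally show ?case using T_add[OF p T_add[OF p w1(1) w2(1)] w3(1)] by blast
qed

lemma t_pow_M:
  assumes p: "prime p" and z: "z ^ (p ^ n) = 1"
  shows "\<exists>y\<in>Tring p z. (1 - z) ^ (p ^ n) = of_nat p * y"
  using t_pow_pj[OF p, of z n] z by simp

lemma um_dvd_M:
  fixes z :: complex
  assumes p: "prime p" and z: "z ^ M = 1" and zm: "z ^ m \<noteq> 1"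
  shows "\<exists>w\<in>Tring p z. of_nat M = (1 - z ^ m) * w"
proof -
  have "(z ^ m) ^ M = 1" using z by (metis power_mult mult.commute power_one)
  hence g: "(\<Sum>i<M. (z ^ m) ^ i) = 0" using geometric_sum[OF zm, of M] by simp
  have "(of_nat M :: complex) = (\<Sum>i<M. (1 - (z ^ m) ^ i))" using g by (simp add: sum_subtractf)
  also have "\<dots> = (\<Sum>i<M. (1 - z ^ m) * (\<Sum>l<i. (z ^ m) ^ l))" by (simp add: one_diff_power_eq)
  also have "\<dots> = (1 - z ^ m) * (\<Sum>i<M. \<Sum>l<i. (z ^ m) ^ l)" by (simp add: sum_distrib_left)
  finally have "(of_nat M :: complex) = (1 - z ^ m) * (\<Sum>i<M. \<Sum>l<i. (z ^ m) ^ l)" .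
  moreover have "(\<Sum>i<M. \<Sum>l<i. (z ^ m) ^ l) \<in> Tring p z"
    by (intro T_sum T_power T_zpow p)
  ultimately show ?thesis by blast
qed

lemma bounded:
  fixes z :: complex
  assumes p: "prime p" and z: "z ^ (p ^ n) = 1" and zm: "z ^ m \<noteq> 1"
    and k: "y \<in> Tring p z" "1 - z ^ m = (1 - z) ^ k * y"
  shows "k < Suc n * p ^ n"
proof (rule ccontr)
  assume "\<not> k < Suc n * p ^ n"
  define K where "K = Suc n * p ^ n"
  have kK: "K \<le> k" using \<open>\<not> k < _\<close> unfolding K_def by simp
  obtain Y where Y: "Y \<in> Tring p z" "(1 - z) ^ (p ^ n) = of_nat p * Y" using t_pow_M[OF p z] by blast
  obtain w where w: "w \<in> Tring p z" "of_nat (p ^ n) = (1 - z ^ m) * w" using um_dvd_M[OF p z zm] by blast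
  have "1 - z ^ m = (1 - z) ^ K * ((1 - z) ^ (k - K) * y)"
    using k(2) kK by (simp add: mult.assoc power_add[symmetric])
  also have "(1 - z) ^ K = ((1 - z) ^ (p ^ n)) ^ Suc n" unfolding K_def
    by (simp only: power_mult[symmetric] mult.commute)
  also have "\<dots> = of_nat p ^ Suc n * Y ^ Suc n" using Y(2) by (simp add: power_mult_distrib)
  finally have u: "1 - z ^ m = of_nat p ^ Suc n * (Y ^ Suc n * ((1 - z) ^ (k - K) * y))" by (simp add: mult.assoc)
  define X where "X = Y ^ Suc n * ((1 - z) ^ (k - K) * y) * w"
  have XT: "X \<in> Tring p z" unfolding X_def
    by (intro T_mult T_power T_diff T_one T_zpow[of p z 1, simplified] p Y(1) k(1) w(1))
  have "(of_nat p ^ n :: complex) = of_nat p ^ n * (of_nat p * X)"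
    using w(2) u unfolding X_def by (simp add: algebra_simps)
  moreover have "(of_nat p :: complex) \<noteq> 0" using p by auto
  ultimately have "1 = of_nat p * X" by simp
  hence "1 / of_nat p = X" using \<open>(of_nat p :: complex) \<noteq> 0\<close> by (simp add: field_simps)
  moreover have "p ^ n > 0" using p by (simp add: prime_gt_0_nat)
  ultimately show False using inv_p_notin_T[OF p z] XT by simp
qed

lemma zmod_pow:
  fixes z :: complex
  assumes "z ^ M = 1"
  shows "z ^ (x mod M) = z ^ x"
proof -
  have "z ^ x = z ^ (M * (x div M) + x mod M)" by (metis mult.commute div_mult_mod_eq)
  also have "\<dots> = z ^ (x mod M)" by (simp only: power_add power_mult assms power_one_right power_one mult_1)
  finally show ?thesis by simp
qed

lemma vt_spec:
  assumes "P = (\<lambda>k. \<exists>y\<in>Tring p z. x = (1 - z) ^ k * y)"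
    and x: "x \<in> Tring p z" and B: "\<And>k. P k \<Longrightarrow> k < B"
  shows "P (vt p z x)" "P k \<Longrightarrow> k \<le> vt p z x"
proof -
  have vt: "vt p z x = Greatest P" unfolding vt_def assms(1) ..
  have P0: "P 0" unfolding assms(1) using x by auto
  show "P (vt p z x)" unfolding vt by (rule GreatestI_nat[of P 0 B]) (auto dest: B intro: P0)
  show "P k \<Longrightarrow> k \<le> vt p z x" unfolding vt by (rule Greatest_le_nat[of P k B]) (auto dest: B)
qed

lemma w_le:
  fixes z :: complex
  assumes p: "prime p" and z: "z ^ (p ^ n) = 1"
    and zm: "z ^ m \<noteq> 1" and zm': "z ^ m' \<noteq> 1" and s: "z ^ m' = (z ^ m) ^ s"
  shows "vt p z (1 - z ^ m) \<le> vt p z (1 - z ^ m')"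
proof -
  define P where "P = (\<lambda>k. \<exists>y\<in>Tring p z. 1 - z ^ m = (1 - z) ^ k * y)"
  define P' where "P' = (\<lambda>k. \<exists>y\<in>Tring p z. 1 - z ^ m' = (1 - z) ^ k * y)"
  have xT: "1 - z ^ m \<in> Tring p z" by (intro T_diff T_one T_zpow p)
  have xT': "1 - z ^ m' \<in> Tring p z" by (intro T_diff T_one T_zpow p)
  have "P (vt p z (1 - z ^ m))"
    by (rule vt_spec(1)[OF P_def xT, of "Suc n * p ^ n"]) (use bounded[OF p z zm] in \<open>auto simp: P_def\<close>)
  then obtain y where y: "y \<in> Tring p z" "1 - z ^ m = (1 - z) ^ vt p z (1 - z ^ m) * y" unfolding P_def by blast
  have "1 - z ^ m' = (1 - z ^ m) * (\<Sum>l<s. (z ^ m) ^ l)" unfolding s by (rule one_diff_power_eq)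
  also have "\<dots> = (1 - z) ^ vt p z (1 - z ^ m) * (y * (\<Sum>l<s. (z ^ m) ^ l))"
    by (subst y(2)) (simp add: mult.assoc)
  finally have eqn: "1 - z ^ m' = (1 - z) ^ vt p z (1 - z ^ m) * (y * (\<Sum>l<s. (z ^ m) ^ l))" .
  have sT: "(\<Sum>l<s. (z ^ m) ^ l) \<in> Tring p z" by (intro T_sum T_power T_zpow p)
  have "P' (vt p z (1 - z ^ m))" unfolding P'_def
    using T_mult[OF p y(1) sT] eqn by blast
  moreover have B': "\<And>k. P' k \<Longrightarrow> k < Suc n * p ^ n" using bounded[OF p z zm'] unfolding P'_def by blast
  ultimately show ?thesis using vt_spec(2)[OF P'_def xT' B'] by blast
qed

lemma pow_rel:
  fixes z :: complex
  assumes p: "prime p" and z: "z ^ (p ^ n) = 1" and m: "m = p ^ e * a" and a: "\<not> p dvd a"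
    and m': "p ^ e dvd m'"
  shows "\<exists>s. z ^ m' = (z ^ m) ^ s"
proof -
  have "coprime a p" using prime_imp_coprime[OF p a] by (simp add: coprime_commute)
  hence "coprime a (p ^ n)" by simp
  then obtain x where x: "[a * x = Suc 0] (mod p ^ n)" using cong_solve_coprime_nat by blast
  obtain b where b: "m' = p ^ e * b" using m' by blast
  have "[p ^ e * b * (a * x) = p ^ e * b * Suc 0] (mod p ^ n)" by (rule cong_mult[OF cong_refl x])
  hence eq: "(p ^ e * b * (a * x)) mod p ^ n = m' mod p ^ n" unfolding cong_def b by simp
  have "(z ^ m) ^ (x * b) = z ^ (p ^ e * b * (a * x))" unfolding m power_mult[symmetric]
    by (simp add: ac_simps)
  also have "\<dots> = z ^ ((p ^ e * b * (a * x)) mod p ^ n)" using zmod_pow[OF z] by simp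
  also have "\<dots> = z ^ m'" unfolding eq using zmod_pow[OF z] by simp
  finally show ?thesis by metis
qed

context
  fixes p n :: nat and z :: complex
  assumes p: "prime p" and n: "n \<ge> 1"
    and z: "z ^ (p ^ n) = 1" and prim: "\<forall>k. 0 < k \<and> k < p ^ n \<longrightarrow> z ^ k \<noteq> 1"
begin

definition "ww m = vt p z (1 - z ^ m)"
definition "ff e = ww (p ^ e)"
fun dd where "dd 0 = ff 0" | "dd (Suc e) = ff (Suc e) - ff e"

lemma p1: "p > 1" using p prime_gt_1_nat by blast

lemma zne: "0 < m \<Longrightarrow> m < p ^ n \<Longrightarrow> z ^ m \<noteq> 1" using prim by blast

lemma ww_le:
  assumes m: "0 < m" "m < p ^ n" and m': "0 < m'" "m' < p ^ n"
    and dec: "m = p ^ e * a" "\<not> p dvd a" and dv: "p ^ e dvd m'"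
  shows "ww m \<le> ww m'"
proof -
  obtain s where "z ^ m' = (z ^ m) ^ s" using pow_rel[OF p z dec dv] by blast
  thus ?thesis unfolding ww_def using w_le[OF p z zne[OF m] zne[OF m']] by blast
qed

lemma ff_mono: "Suc e < n \<Longrightarrow> ff e \<le> ff (Suc e)"
proof -
  assume e: "Suc e < n"
  have "p ^ Suc e < p ^ n" using e p1 by (intro power_strict_increasing) auto
  moreover have "p ^ e < p ^ Suc e" using p1 by simp
  ultimately show ?thesis unfolding ff_def using p1
    by (intro ww_le[of _ _ e 1]) (use e in \<open>auto simp: p\<close>)
qed

lemma tele: "v < n \<Longrightarrow> (\<Sum>e\<le>v. dd e) = ff v"
proof (induction v)
  case (Suc v)
  thus ?case using ff_mono[of v] by simp
qed simp

lemma ww_decomp: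
  assumes m: "0 < m" "m < p ^ n"
  shows "ww m = (\<Sum>e<n. if p ^ e dvd m then dd e else 0)"
proof -
  define v where "v = multiplicity p m"
  have nu: "\<not> is_unit p" using p not_prime_unit by blast
  obtain a where a: "m = p ^ v * a" "\<not> p dvd a" unfolding v_def using multiplicity_decompose'[of m p] m nu by auto
  have "p ^ v dvd m" using a by simp
  hence "p ^ v \<le> m" using m by (intro dvd_imp_le) auto
  hence "p ^ v < p ^ n" using m by simp
  hence vn: "v < n" using p1 by (rule power_less_imp_less_exp[rotated])
  have pv0: "0 < p ^ v" using p1 by simp
  have "ww m \<le> ww (p ^ v)" by (rule ww_le[OF m pv0 \<open>p ^ v < p ^ n\<close> a]) simp
  moreover have "ww (p ^ v) \<le> ww m" by (rule ww_le[OF pv0 \<open>p ^ v < p ^ n\<close> m, of v 1]) (use p \<open>p ^ v dvd m\<close> in auto)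
  ultimately have "ww m = ff v" unfolding ff_def by simp
  also have "\<dots> = (\<Sum>e\<le>v. dd e)" using tele[OF vn] by simp
  also have "{..v} = {e\<in>{..<n}. e \<le> v}" using vn by auto
  also have "(\<Sum>e\<in>{e\<in>{..<n}. e \<le> v}. dd e) = (\<Sum>e<n. if e \<le> v then dd e else 0)"
    by (rule sum.inter_filter) simp
  also have "\<dots> = (\<Sum>e<n. if p ^ e dvd m then dd e else 0)"
    using m nu power_dvd_iff_le_multiplicity[of m p] unfolding v_def by (intro sum.cong refl) auto
  finally show ?thesis .
qed

lemma card_shift:
  fixes d j k :: nat
  assumes d: "d > 0" and jk: "j \<le> k"
  shows "card {i\<in>{..<j}. d dvd j - i} \<le> card {i\<in>{..<j}. d dvd k - i}"
proof (rule card_inj_on_le)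
  define r where "r = (k - j) mod d"
  define q where "q = (k - j) div d"
  have qr: "q * d + r = k - j" unfolding q_def r_def by simp
  have rd: "r < d" unfolding r_def using d by simp
  show "inj_on (\<lambda>i. i + r) {i\<in>{..<j}. d dvd j - i}" by (auto simp: inj_on_def)
  show "(\<lambda>i. i + r) ` {i\<in>{..<j}. d dvd j - i} \<subseteq> {i\<in>{..<j}. d dvd k - i}"
  proof
    fix x assume "x \<in> (\<lambda>i. i + r) ` {i\<in>{..<j}. d dvd j - i}"
    then obtain i where i: "i < j" "d dvd j - i" and x: "x = i + r" by auto
    have "d \<le> j - i" using i by (intro dvd_imp_le) auto
    hence "x < j" using x rd by linarith
    moreover have "d dvd k - x"
    proof -
      have "k - x = q * d + (j - i)" using x qr i jk by linarith
      moreover have "d dvd q * d + (j - i)" using i(2) by simp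
      ultimately show ?thesis by metis
    qed
    ultimately show "x \<in> {i\<in>{..<j}. d dvd k - i}" by simp
  qed
qed simp

lemma sum_ww:
  fixes j :: nat
  assumes "\<And>i. i < j \<Longrightarrow> 0 < g i \<and> g i < p ^ n"
  shows "(\<Sum>i<j. ww (g i)) = (\<Sum>e<n. dd e * card {i\<in>{..<j}. p ^ e dvd g i})"
proof -
  have "(\<Sum>i<j. ww (g i)) = (\<Sum>i<j. \<Sum>e<n. if p ^ e dvd g i then dd e else 0)"
    using assms by (intro sum.cong refl) (simp add: ww_decomp)
  also have "\<dots> = (\<Sum>e<n. \<Sum>i<j. if p ^ e dvd g i then dd e else 0)" by (rule sum.swap)
  also have "\<dots> = (\<Sum>e<n. dd e * card {i\<in>{..<j}. p ^ e dvd g i})"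
  proof (intro sum.cong refl)
    fix e
    have "(\<Sum>i<j. if p ^ e dvd g i then dd e else 0) = (\<Sum>i\<in>{i\<in>{..<j}. p ^ e dvd g i}. dd e)"
      by (rule sum.inter_filter[symmetric]) simp
    thus "(\<Sum>i<j. if p ^ e dvd g i then dd e else 0) = dd e * card {i\<in>{..<j}. p ^ e dvd g i}" by simp
  qed
  finally show ?thesis .
qed

lemma window:
  assumes jk: "j < k" "k < p ^ n"
  shows "(\<Sum>i<j. ww (j - i)) \<le> (\<Sum>i<j. ww (k - i))"
proof -
  have "(\<Sum>i<j. ww (j - i)) = (\<Sum>e<n. dd e * card {i\<in>{..<j}. p ^ e dvd j - i})"
    by (rule sum_ww) (use jk in auto)
  also have "\<dots> \<le> (\<Sum>e<n. dd e * card {i\<in>{..<j}. p ^ e dvd k - i})"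
    using p1 jk by (intro sum_mono mult_le_mono2 card_shift) auto
  also have "\<dots> = (\<Sum>i<j. ww (k - i))"
    by (rule sum_ww[symmetric]) (use jk in auto)
  finally show ?thesis .
qed

lemma vt_unit:
  assumes x: "x \<in> Tring p z"
  shows "vt p z (z ^ i * x) = vt p z x"
proof -
  have u: "z ^ ((p ^ n - 1) * i) * z ^ i = 1"
  proof -
    have "z ^ ((p ^ n - 1) * i) * z ^ i = z ^ (p ^ n * i)"
      using p1 by (simp add: power_add[symmetric] algebra_simps)
    thus ?thesis using z by (simp add: power_mult)
  qed
  have "(\<lambda>k. \<exists>y\<in>Tring p z. z ^ i * x = (1 - z) ^ k * y) = (\<lambda>k. \<exists>y\<in>Tring p z. x = (1 - z) ^ k * y)"
  proof (intro ext iffI)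
    fix k assume "\<exists>y\<in>Tring p z. z ^ i * x = (1 - z) ^ k * y"
    then obtain y where y: "y \<in> Tring p z" "z ^ i * x = (1 - z) ^ k * y" by blast
    have "x = z ^ ((p ^ n - 1) * i) * (z ^ i * x)" using u by (simp add: mult.assoc[symmetric])
    also have "\<dots> = (1 - z) ^ k * (z ^ ((p ^ n - 1) * i) * y)" using y(2) by (simp add: algebra_simps)
    finally show "\<exists>y\<in>Tring p z. x = (1 - z) ^ k * y" using T_mult[OF p T_zpow[OF p] y(1)] by blast
  next
    fix k assume "\<exists>y\<in>Tring p z. x = (1 - z) ^ k * y"
    then obtain y where y: "y \<in> Tring p z" "x = (1 - z) ^ k * y" by blast
    hence "z ^ i * x = (1 - z) ^ k * (z ^ i * y)" by (simp add: algebra_simps)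
    thus "\<exists>y\<in>Tring p z. z ^ i * x = (1 - z) ^ k * y" using T_mult[OF p T_zpow[OF p] y(1)] by blast
  qed
  thus ?thesis unfolding vt_def by simp
qed

lemma vt_diff:
  assumes "i < j"
  shows "vt p z ((1 - z ^ j) - (1 - z ^ i)) = ww (j - i)"
proof -
  have "(1 - z ^ j) - (1 - z ^ i) = z ^ i * (1 - z ^ (j - i))"
    using assms by (simp add: algebra_simps power_add[symmetric])
  thus ?thesis unfolding ww_def using vt_unit[of "1 - z ^ (j - i)" i] T_diff[OF p T_one[OF p] T_zpow[OF p]] by simp
qed

lemma main: "minimally_ordered p z (p ^ n) (\<lambda>j. 1 - z ^ j)"
  unfolding minimally_ordered_def
proof (intro conjI allI impI)
  fix i assume "i < p ^ n"
  show "1 - z ^ i \<in> Tring p z" by (intro T_diff T_one T_zpow p)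
next
  have z0: "z \<noteq> 0" using z p1 by (auto simp: power_0_left)
  have *: "z ^ i \<noteq> z ^ j" if "i < j" "j < p ^ n" for i j
  proof
    assume "z ^ i = z ^ j"
    moreover have "z ^ j = z ^ i * z ^ (j - i)" using that by (simp add: power_add[symmetric])
    ultimately have "z ^ (j - i) = 1" using z0 by simp
    thus False using zne[of "j - i"] that by simp
  qed
  show "inj_on (\<lambda>j. 1 - z ^ j) {0..<p ^ n}"
    unfolding inj_on_def
  proof (intro ballI impI)
    fix i j assume ij: "i \<in> {0..<p ^ n}" "j \<in> {0..<p ^ n}" "1 - z ^ i = 1 - z ^ j"
    show "i = j"
    proof (rule ccontr)
      assume "i \<noteq> j"
      hence "i < j \<or> j < i" by auto
      thus False using *[of i j] *[of j i] ij by auto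
    qed
  qed
next
  fix j k assume j: "j < p ^ n" and jk: "j < k \<and> k < p ^ n"
  have "(\<Sum>i<j. vt p z ((1 - z ^ j) - (1 - z ^ i))) = (\<Sum>i<j. ww (j - i))"
    by (intro sum.cong refl vt_diff) simp
  also have "\<dots> \<le> (\<Sum>i<j. ww (k - i))" using jk by (intro window) auto
  also have "\<dots> = (\<Sum>i<j. vt p z ((1 - z ^ k) - (1 - z ^ i)))"
    using jk by (intro sum.cong refl vt_diff[symmetric]) auto
  finally show "(\<Sum>i<j. vt p z ((1 - z ^ j) - (1 - z ^ i))) \<le> (\<Sum>i<j. vt p z ((1 - z ^ k) - (1 - z ^ i)))" .
qed

end

theorem lemma3p14:
  fixes p n :: nat and \<zeta> :: complex
  assumes "prime p" and "n \<ge> 1"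
    and "\<zeta> ^ (p ^ n) = 1" and "\<forall>k. 0 < k \<and> k < p ^ n \<longrightarrow> \<zeta> ^ k \<noteq> 1"
  shows "minimally_ordered p \<zeta> (p ^ n) (\<lambda>j. 1 - \<zeta> ^ j)"
  by (rule main[OF assms])

end
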